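(* For every $\beta\in B_n$, every entry of the matrix $\phi(\beta)$ is of the form $a\beta$ for some $a\in\mathbf{Z}[F_n]$.
   Context: The braid group $B_n$ ($n\ge2$) has generators $\sigma_1,\dots,\sigma_{n-1}$ with relations $\sigma_i\sigma_j=\sigma_j\sigma_i$ for $|i-j|>1$ and $\sigma_i\sigma_j\sigma_i=\sigma_j\sigma_i\sigma_j$ for $|i-j|=1$. Let $F_n$ be the free group on $g_1,\dots,g_n$. The semidirect product $F_n\rtimes B_n$ is the group generated by $F_n$ and $B_n$ subject to the additional relations $g_{i+1}\sigma_i=\sigma_i g_i$, $g_i\sigma_i=\sigma_i g_i g_{i+1}g_i^{-1}$, and $g_j\sigma_i=\sigma_i g_j$ for $j\notin\{i,i+1\}$; $\mathbf{Z}[F_n]\subset\mathbf{Z}[F_n\rtimes B_n]$ are the group rings. For $i=1,\dots,n-1$ let $R_i=\begin{bmatrix}0&g_i\\1&1-g_i\end{bmatrix}$. Let $\phi$ be the homomorphism from $B_n$ to the group of invertible $n\times n$ matrices over $\mathbf{Z}[F_n\rtimes B_n]$ (usual matrix multiplication) given by $\phi(\sigma_i)=\sigma_i\cdot\mathrm{diag}(I_{i-1},R_i,I_{n-i-1})$, where the scalar $\sigma_i$ multiplies every entry on the left. *)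

theory Defs
  imports "Jordan_Normal_Form.Matrix"
begin

(* The ring R plays the role of Z[F_n \<rtimes> B_n]: g i, g' i are the images of g_i and g_i^{-1},
   s i, s' i the images of sigma_i and sigma_i^{-1}.  Indices are 1-based as in the paper;
   matrix rows/columns are 0-based (row j of the paper is row j-1 here). *)

inductive_set ZF :: "nat \<Rightarrow> (nat \<Rightarrow> 'a::ring_1) \<Rightarrow> (nat \<Rightarrow> 'a) \<Rightarrow> 'a set"
  for n :: nat and g g' :: "nat \<Rightarrow> 'a" where
  one: "1 \<in> ZF n g g'"
| gen: "1 \<le> i \<Longrightarrow> i \<le> n \<Longrightarrow> g i \<in> ZF n g g'"
| geninv: "1 \<le> i \<Longrightarrow> i \<le> n \<Longrightarrow> g' i \<in> ZF n g g'"
| add: "a \<in> ZF n g g' \<Longrightarrow> b \<in> ZF n g g' \<Longrightarrow> a + b \<in> ZF n g g'"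
| neg: "a \<in> ZF n g g' \<Longrightarrow> - a \<in> ZF n g g'"
| mult: "a \<in> ZF n g g' \<Longrightarrow> b \<in> ZF n g g' \<Longrightarrow> a * b \<in> ZF n g g'"

text \<open>diag(I_{i-1}, R_i, I_{n-i-1}), 0-based entries.\<close>
definition blockR :: "(nat \<Rightarrow> 'a::ring_1) \<Rightarrow> nat \<Rightarrow> nat \<Rightarrow> nat \<Rightarrow> 'a" where
  "blockR g i j k =
     (if j = i - 1 \<and> k = i - 1 then 0
      else if j = i - 1 \<and> k = i then g i
      else if j = i \<and> k = i - 1 then 1
      else if j = i \<and> k = i then 1 - g i
      else if j = k then 1 else 0)"

text \<open>diag(I_{i-1}, R_i^{-1}, I_{n-i-1}) with R_i^{-1} = [[1 - g_i^{-1}, 1], [g_i^{-1}, 0]].\<close>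
definition blockRinv :: "(nat \<Rightarrow> 'a::ring_1) \<Rightarrow> nat \<Rightarrow> nat \<Rightarrow> nat \<Rightarrow> 'a" where
  "blockRinv g' i j k =
     (if j = i - 1 \<and> k = i - 1 then 1 - g' i
      else if j = i - 1 \<and> k = i then 1
      else if j = i \<and> k = i - 1 then g' i
      else if j = i \<and> k = i then 0
      else if j = k then 1 else 0)"

definition phi_gen :: "nat \<Rightarrow> (nat \<Rightarrow> 'a::ring_1) \<Rightarrow> (nat \<Rightarrow> 'a) \<Rightarrow> nat \<Rightarrow> 'a mat" where
  "phi_gen n s g i = mat n n (\<lambda>(j, k). s i * blockR g i j k)"

text \<open>phi(sigma_i^{-1}) = phi(sigma_i)^{-1} = diag(I, R_i^{-1}, I) \<cdot> sigma_i^{-1} (scalar on the right).\<close>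
definition phi_gen_inv :: "nat \<Rightarrow> (nat \<Rightarrow> 'a::ring_1) \<Rightarrow> (nat \<Rightarrow> 'a) \<Rightarrow> nat \<Rightarrow> 'a mat" where
  "phi_gen_inv n s' g' i = mat n n (\<lambda>(j, k). blockRinv g' i j k * s' i)"

text \<open>Braid words: (i, True) = sigma_i, (i, False) = sigma_i^{-1}.\<close>
definition braid_word :: "nat \<Rightarrow> (nat \<times> bool) list \<Rightarrow> bool" where
  "braid_word n w \<longleftrightarrow> (\<forall>(i, b) \<in> set w. 1 \<le> i \<and> i < n)"

definition phi_word :: "nat \<Rightarrow> (nat \<Rightarrow> 'a::ring_1) \<Rightarrow> (nat \<Rightarrow> 'a) \<Rightarrow> (nat \<Rightarrow> 'a) \<Rightarrow> (nat \<Rightarrow> 'a)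
    \<Rightarrow> (nat \<times> bool) list \<Rightarrow> 'a mat" where
  "phi_word n s s' g g' w =
     foldr (\<lambda>(i, b) M. (if b then phi_gen n s g i else phi_gen_inv n s' g' i) * M) w (1\<^sub>m n)"

definition braid_elt :: "(nat \<Rightarrow> 'a::ring_1) \<Rightarrow> (nat \<Rightarrow> 'a) \<Rightarrow> (nat \<times> bool) list \<Rightarrow> 'a" where
  "braid_elt s s' w = foldr (\<lambda>(i, b) x. (if b then s i else s' i) * x) w 1"

end

theory Submission
  imports Defs
begin

lemma ZF_zero: "0 \<in> ZF n g g'"
proof -
  have "1 + - 1 \<in> ZF n g g'" by (intro ZF.add ZF.neg ZF.one)
  thus ?thesis by simp
qed

lemma ZF_sum: "(\<And>l. l \<in> A \<Longrightarrow> f l \<in> ZF n g g') \<Longrightarrow> sum f A \<in> ZF n g g'"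
proof (induction A rule: infinite_finite_induct)
  case (infinite A) then show ?case using ZF_zero by simp
next
  case empty then show ?case using ZF_zero by simp
next
  case (insert x F) then show ?case by (simp add: ZF.add)
qed

lemma ZF_conj:
  fixes x :: "'a::ring_1"
  assumes G: "\<And>i. 1\<le>i \<Longrightarrow> i\<le>n \<Longrightarrow> \<exists>c\<in>ZF n g g'. x * g i = c * x"
    and G': "\<And>i. 1\<le>i \<Longrightarrow> i\<le>n \<Longrightarrow> \<exists>c\<in>ZF n g g'. x * g' i = c * x"
    and c: "c \<in> ZF n g g'"
  shows "\<exists>c'\<in>ZF n g g'. x * c = c' * x"
  using c
proof (induction rule: ZF.induct)
  case one then show ?case by (intro bexI[of _ 1]) (auto intro: ZF.one)
next
  case (gen i) then show ?case using G by blast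
next
  case (geninv i) then show ?case using G' by blast
next
  case (add a b)
  then obtain a' b' where "a' \<in> ZF n g g'" "x*a = a'*x" "b' \<in> ZF n g g'" "x*b = b'*x" by blast
  then show ?case by (intro bexI[of _ "a'+b'"]) (auto simp: algebra_simps intro: ZF.add)
next
  case (neg a)
  then obtain a' where "a' \<in> ZF n g g'" "x*a = a'*x" by blast
  then show ?case by (intro bexI[of _ "-a'"]) (auto intro: ZF.neg)
next
  case (mult a b)
  then obtain a' b' where "a' \<in> ZF n g g'" "x*a = a'*x" "b' \<in> ZF n g g'" "x*b = b'*x" by blast
  then have "x*(a*b) = (a'*b')*x" by (metis mult.assoc)
  then show ?case using \<open>a' \<in> _\<close> \<open>b' \<in> _\<close> by (intro bexI[of _ "a'*b'"]) (auto intro: ZF.mult)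
qed

lemma inv_gen:
  fixes s gg gi c d :: "'a::ring_1"
  assumes "s * gg = c * s" "gg * gi = 1" "d * c = 1"
  shows "s * gi = d * s"
proof -
  have "d * s = d * s * (gg * gi)" using assms by simp
  also have "\<dots> = d * (s * gg) * gi" by (simp add: mult.assoc)
  also have "\<dots> = d * (c * s) * gi" using assms by simp
  also have "\<dots> = (d * c) * s * gi" by (simp add: mult.assoc)
  also have "\<dots> = s * gi" using assms by simp
  finally show ?thesis by simp
qed

lemma flip_gen:
  fixes s s' gg c :: "'a::ring_1"
  assumes "s * c = gg * s" "s * s' = 1" "s' * s = 1"
  shows "s' * gg = c * s'"
proof -
  have "s' * gg = s' * gg * (s * s')" using assms by simp
  also have "\<dots> = s' * (gg * s) * s'" by (simp add: mult.assoc)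
  also have "\<dots> = s' * (s * c) * s'" using assms by simp
  also have "\<dots> = (s' * s) * c * s'" by (simp add: mult.assoc)
  also have "\<dots> = c * s'" using assms by simp
  finally show ?thesis by simp
qed

theorem lemma3p2:
  fixes n :: nat and s s' g g' :: "nat \<Rightarrow> 'a::ring_1" and w :: "(nat \<times> bool) list"
  assumes n2: "n \<ge> 2"
    and g_inv: "\<And>i. 1 \<le> i \<Longrightarrow> i \<le> n \<Longrightarrow> g i * g' i = 1 \<and> g' i * g i = 1"
    and s_inv: "\<And>i. 1 \<le> i \<Longrightarrow> i < n \<Longrightarrow> s i * s' i = 1 \<and> s' i * s i = 1"
    and braid_comm: "\<And>i j. 1 \<le> i \<Longrightarrow> i < n \<Longrightarrow> 1 \<le> j \<Longrightarrow> j < n \<Longrightarrow>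
                       i + 1 < j \<or> j + 1 < i \<Longrightarrow> s i * s j = s j * s i"
    and braid_rel: "\<And>i j. 1 \<le> i \<Longrightarrow> i < n \<Longrightarrow> 1 \<le> j \<Longrightarrow> j < n \<Longrightarrow>
                       i = j + 1 \<or> j = i + 1 \<Longrightarrow> s i * s j * s i = s j * s i * s j"
    and semi1: "\<And>i. 1 \<le> i \<Longrightarrow> i < n \<Longrightarrow> g (i + 1) * s i = s i * g i"
    and semi2: "\<And>i. 1 \<le> i \<Longrightarrow> i < n \<Longrightarrow> g i * s i = s i * g i * g (i + 1) * g' i"
    and semi3: "\<And>i j. 1 \<le> i \<Longrightarrow> i < n \<Longrightarrow> 1 \<le> j \<Longrightarrow> j \<le> n \<Longrightarrow> j \<noteq> i \<Longrightarrow> j \<noteq> i + 1 \<Longrightarrow>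
                       g j * s i = s i * g j"
    and w: "braid_word n w"
  shows "\<forall>j < n. \<forall>k < n. \<exists>a \<in> ZF n g g'.
           phi_word n s s' g g' w $$ (j, k) = a * braid_elt s s' w"
proof -
  let ?Z = "ZF n g g'"
  have Zg: "g i \<in> ?Z" "g' i \<in> ?Z" if "1 \<le> i" "i \<le> n" for i
    using that by (auto intro: ZF.gen ZF.geninv)
  have conj_s: "\<exists>c'\<in>?Z. s i * c = c' * s i" if i: "1 \<le> i" "i < n" and c: "c \<in> ?Z" for i c
  proof (rule ZF_conj[OF _ _ c])
    have gi: "g i * g' i = 1" "g' i * g i = 1" "g (i+1) * g' (i+1) = 1" "g' (i+1) * g (i+1) = 1"
      using g_inv i by auto
    have e1: "s i * g i = g (i+1) * s i" using semi1[OF i] by simp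
    have e2: "s i * g (i+1) = (g' (i+1) * g i * g (i+1)) * s i"
    proof -
      have "(g' (i+1) * g i * g (i+1)) * s i = g' (i+1) * g i * (g (i+1) * s i)"
        by (simp add: mult.assoc)
      also have "\<dots> = g' (i+1) * (g i * s i) * g i" using semi1[OF i] by (simp add: mult.assoc)
      also have "\<dots> = g' (i+1) * (s i * g i) * g (i+1) * (g' i * g i)"
        using semi2[OF i] by (simp add: mult.assoc)
      also have "\<dots> = (g' (i+1) * (g (i+1) * s i)) * g (i+1)"
        using gi semi1[OF i] by (simp add: mult.assoc)
      also have "\<dots> = s i * g (i+1)" using gi by (simp add: mult.assoc[symmetric])
      finally show ?thesis by simp
    qed
    have e3: "s i * g' i = g' (i+1) * s i"
      by (rule inv_gen[OF e1]) (use gi in auto)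
    have e4: "s i * g' (i+1) = (g' (i+1) * g' i * g (i+1)) * s i"
    proof (rule inv_gen[OF e2])
      show "g (i + 1) * g' (i + 1) = 1" using gi by simp
      have "g' (i + 1) * g' i * g (i + 1) * (g' (i + 1) * g i * g (i + 1))
          = g' (i + 1) * g' i * (g (i + 1) * g' (i + 1)) * g i * g (i + 1)" by (simp add: mult.assoc)
      also have "\<dots> = g' (i + 1) * (g' i * g i) * g (i + 1)" using gi by (simp add: mult.assoc)
      also have "\<dots> = 1" using gi by simp
      finally show "g' (i + 1) * g' i * g (i + 1) * (g' (i + 1) * g i * g (i + 1)) = 1" .
    qed
    show "\<exists>c\<in>?Z. s i * g j = c * s i" if j: "1 \<le> j" "j \<le> n" for j
    proof -
      consider "j = i" | "j = i+1" | "j \<noteq> i" "j \<noteq> i+1" by blast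
      then show ?thesis
      proof cases
        case 1 then show ?thesis using e1 Zg i by auto
      next
        case 2 then show ?thesis using e2 Zg i by (auto intro!: ZF.mult)
      next
        case 3 then show ?thesis using semi3[OF i j] Zg j by (metis)
      qed
    qed
    show "\<exists>c\<in>?Z. s i * g' j = c * s i" if j: "1 \<le> j" "j \<le> n" for j
    proof -
      consider "j = i" | "j = i+1" | "j \<noteq> i" "j \<noteq> i+1" by blast
      then show ?thesis
      proof cases
        case 1 then show ?thesis using e3 Zg i by auto
      next
        case 2 then show ?thesis using e4 Zg i by (auto intro!: ZF.mult)
      next
        case 3
        have "s i * g' j = g' j * s i"
          by (rule inv_gen[of _ "g j"]) (use semi3[OF i j 3] g_inv[OF j] in auto)
        then show ?thesis using Zg j by auto
      qed
    qed
  qed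
  have conj_s': "\<exists>c'\<in>?Z. s' i * c = c' * s' i" if i: "1 \<le> i" "i < n" and c: "c \<in> ?Z" for i c
  proof (rule ZF_conj[OF _ _ c])
    have gi: "g i * g' i = 1" "g' i * g i = 1" "g (i+1) * g' (i+1) = 1" "g' (i+1) * g (i+1) = 1"
      using g_inv i by auto
    have si: "s i * s' i = 1" "s' i * s i = 1" using s_inv i by auto
    have e1: "s' i * g (i+1) = g i * s' i"
      by (rule flip_gen) (use semi1[OF i] si in auto)
    have e2: "s' i * g i = (g i * g (i+1) * g' i) * s' i"
      by (rule flip_gen) (use semi2[OF i] si in \<open>auto simp: mult.assoc\<close>)
    have e3: "s' i * g' (i+1) = g' i * s' i"
      by (rule inv_gen[OF e1]) (use gi in auto)
    have e4: "s' i * g' i = (g i * g' (i+1) * g' i) * s' i"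
    proof (rule inv_gen[OF e2])
      show "g i * g' i = 1" using gi by simp
      have "g i * g' (i+1) * g' i * (g i * g (i+1) * g' i)
          = g i * g' (i+1) * (g' i * g i) * g (i+1) * g' i" by (simp add: mult.assoc)
      also have "\<dots> = g i * (g' (i+1) * g (i+1)) * g' i" using gi by (simp add: mult.assoc)
      also have "\<dots> = 1" using gi by simp
      finally show "g i * g' (i+1) * g' i * (g i * g (i+1) * g' i) = 1" .
    qed
    show "\<exists>c\<in>?Z. s' i * g j = c * s' i" if j: "1 \<le> j" "j \<le> n" for j
    proof -
      consider "j = i" | "j = i+1" | "j \<noteq> i" "j \<noteq> i+1" by blast
      then show ?thesis
      proof cases
        case 1 then show ?thesis using e2 Zg i by (auto intro!: ZF.mult)
      next
        case 2 then show ?thesis using e1 Zg i by auto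
      next
        case 3
        have "s' i * g j = g j * s' i"
          by (rule flip_gen) (use semi3[OF i j 3] si in auto)
        then show ?thesis using Zg j by auto
      qed
    qed
    show "\<exists>c\<in>?Z. s' i * g' j = c * s' i" if j: "1 \<le> j" "j \<le> n" for j
    proof -
      consider "j = i" | "j = i+1" | "j \<noteq> i" "j \<noteq> i+1" by blast
      then show ?thesis
      proof cases
        case 1 then show ?thesis using e4 Zg i by (auto intro!: ZF.mult)
      next
        case 2 then show ?thesis using e3 Zg i by auto
      next
        case 3
        have a: "s' i * g j = g j * s' i"
          by (rule flip_gen) (use semi3[OF i j 3] si in auto)
        have "s' i * g' j = g' j * s' i"
          by (rule inv_gen[OF a]) (use g_inv[OF j] in auto)
        then show ?thesis using Zg j by auto
      qed
    qed
  qed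
  have bR: "blockR g i j l \<in> ?Z" if "1 \<le> i" "i < n" for i j l
  proof -
    have "1 - g i \<in> ?Z" using that Zg[of i]
      by (simp only: diff_conv_add_uminus) (intro ZF.add ZF.neg ZF.one, auto)
    then show ?thesis using that Zg[of i] ZF_zero[of n g g'] unfolding blockR_def by (simp add: ZF.one)
  qed
  have bRi: "blockRinv g' i j l \<in> ?Z" if "1 \<le> i" "i < n" for i j l
  proof -
    have "1 - g' i \<in> ?Z" using that Zg[of i]
      by (simp only: diff_conv_add_uminus) (intro ZF.add ZF.neg ZF.one, auto)
    then show ?thesis using that Zg[of i] ZF_zero[of n g g'] unfolding blockRinv_def by (simp add: ZF.one)
  qed
  have "dim_row (phi_word n s s' g g' w) = n \<and> dim_col (phi_word n s s' g g' w) = n \<and>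
    (\<forall>j < n. \<forall>k < n. \<exists>a \<in> ?Z. phi_word n s s' g g' w $$ (j, k) = a * braid_elt s s' w)"
    using w
  proof (induction w)
    case Nil
    show ?case by (auto simp: phi_word_def braid_elt_def intro: ZF.one ZF_zero)
  next
    case (Cons x w)
    obtain i b where x: "x = (i, b)" by force
    have i: "1 \<le> i" "i < n" using Cons.prems x by (auto simp: braid_word_def)
    have ww: "braid_word n w" using Cons.prems by (auto simp: braid_word_def)
    define M where "M = phi_word n s s' g g' w"
    define \<beta> where "\<beta> = braid_elt s s' w"
    have IH: "dim_row M = n" "dim_col M = n"
      "\<forall>j < n. \<forall>k < n. \<exists>a \<in> ?Z. M $$ (j, k) = a * \<beta>"
      using Cons.IH[OF ww] unfolding M_def \<beta>_def by auto
    have PW: "phi_word n s s' g g' (x # w) =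
      (if b then phi_gen n s g i else phi_gen_inv n s' g' i) * M"
      unfolding phi_word_def M_def x by simp
    have BE: "braid_elt s s' (x # w) = (if b then s i else s' i) * \<beta>"
      unfolding braid_elt_def \<beta>_def x by simp
    show ?case
    proof (intro conjI allI impI)
      show "dim_row (phi_word n s s' g g' (x # w)) = n"
        using PW by (simp add: phi_gen_def phi_gen_inv_def)
      show "dim_col (phi_word n s s' g g' (x # w)) = n"
        using PW IH by simp
      fix j k assume jk: "j < n" "k < n"
      from IH(3) jk(2) have "\<forall>l. \<exists>a. l < n \<longrightarrow> a \<in> ?Z \<and> M $$ (l, k) = a * \<beta>" by blast
      then obtain A where A: "\<And>l. l < n \<Longrightarrow> A l \<in> ?Z \<and> M $$ (l, k) = A l * \<beta>" by metis
      show "\<exists>a\<in>?Z. phi_word n s s' g g' (x # w) $$ (j, k) = a * braid_elt s s' (x # w)"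
      proof (cases b)
        case True
        have "phi_word n s s' g g' (x # w) $$ (j, k)
            = (\<Sum>l<n. (s i * blockR g i j l) * M $$ (l, k))"
          using PW True jk IH
          by (simp add: phi_gen_def scalar_prod_def lessThan_atLeast0)
        also have "\<dots> = (\<Sum>l<n. s i * (blockR g i j l * A l) * \<beta>)"
          using A by (intro sum.cong) (auto simp: mult.assoc)
        also have "\<dots> = s i * (\<Sum>l<n. blockR g i j l * A l) * \<beta>"
          by (simp add: sum_distrib_left sum_distrib_right)
        finally have eq: "phi_word n s s' g g' (x # w) $$ (j, k) =
            s i * (\<Sum>l<n. blockR g i j l * A l) * \<beta>" .
        have "(\<Sum>l<n. blockR g i j l * A l) \<in> ?Z"
          using A bR[OF i] by (intro ZF_sum ZF.mult) auto
        then obtain c' where "c' \<in> ?Z" "s i * (\<Sum>l<n. blockR g i j l * A l) = c' * s i"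
          using conj_s[OF i] by blast
        then show ?thesis using eq BE True by (intro bexI[of _ c']) (auto simp: mult.assoc)
      next
        case False
        have "\<forall>l. \<exists>c. l < n \<longrightarrow> c \<in> ?Z \<and> s' i * A l = c * s' i"
          using conj_s'[OF i] A by metis
        then obtain C where C: "\<And>l. l < n \<Longrightarrow> C l \<in> ?Z \<and> s' i * A l = C l * s' i" by metis
        have "phi_word n s s' g g' (x # w) $$ (j, k)
            = (\<Sum>l<n. (blockRinv g' i j l * s' i) * M $$ (l, k))"
          using PW False jk IH
          by (simp add: phi_gen_inv_def scalar_prod_def lessThan_atLeast0)
        also have "\<dots> = (\<Sum>l<n. blockRinv g' i j l * (s' i * A l) * \<beta>)"
          using A by (intro sum.cong) (auto simp: mult.assoc)
        also have "\<dots> = (\<Sum>l<n. blockRinv g' i j l * C l * s' i * \<beta>)"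
          using C by (intro sum.cong) (auto simp: mult.assoc)
        also have "\<dots> = (\<Sum>l<n. blockRinv g' i j l * C l) * (s' i * \<beta>)"
          by (simp add: sum_distrib_right mult.assoc)
        finally have eq: "phi_word n s s' g g' (x # w) $$ (j, k) =
            (\<Sum>l<n. blockRinv g' i j l * C l) * (s' i * \<beta>)" .
        have "(\<Sum>l<n. blockRinv g' i j l * C l) \<in> ?Z"
          using C bRi[OF i] by (intro ZF_sum ZF.mult) auto
        then show ?thesis using eq BE False by auto
      qed
    qed
  qed
  then show ?thesis by blast
qed

end
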